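(* Let $v,w$ be positive integers, $\theta\in[0,1]$, and let $K_{v,w}$ be the complete bipartite graph with parts $V$, $W$, $|V|=v$, $|W|=w$. Let $X$ be the capture time (the number of the move at which capture occurs) in the tipsy cop and drunken robber game on $K_{v,w}$, and let $\mathbb{E}^i[X]$ be its expectation when the game starts in Position $i$ (whenever that position exists). Then \begin{align*} \mathbb{E}^1[X]&=\frac{4vw-3w-v+1}{v+w-1}, & \mathbb{E}^2[X]&=\frac{2\,(vw+\theta v(w-1))}{vw-\theta^2(v-1)(w-1)},\\ \mathbb{E}^3[X]&=\frac{4vw-3v-w+1}{v+w-1}, & \mathbb{E}^4[X]&=\frac{2\,(vw+\theta w(v-1))}{vw-\theta^2(v-1)(w-1)}. \end{align*}
   Context: Tipsy cop and drunken robber game on a finite connected graph $G$: a cop and a robber are placed at distinct vertices. Moves are numbered $1,2,3,\dots$; the robber makes the odd-numbered moves and the cop the even-numbered moves, and on each move the mover must move to a vertex adjacent to its current vertex (staying put is not allowed). The robber always moves to a neighbor chosen uniformly at random. The cop, independently at each of her moves, with probability $\theta$ moves to a neighbor chosen uniformly at random, and with probability $1-\theta$ makes a directed move to a neighbor lying on a shortest path to the robber's current vertex (in particular onto the robber's vertex if it is adjacent). All random choices are independent. The robber is captured (and the game ends) as soon as both occupy the same vertex. Starting positions on $K_{v,w}$: Position 1: the cop is at a vertex of $V$ and the robber at a vertex of $W$; Position 2: cop and robber are at two distinct vertices of $V$; Position 3: the robber is at a vertex of $V$ and the cop at a vertex of $W$; Position 4: cop and robber are at two distinct vertices of $W$.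 *)

theory Defs
  imports "HOL-Probability.Probability"
begin

inductive walk :: "('a \<Rightarrow> 'a \<Rightarrow> bool) \<Rightarrow> nat \<Rightarrow> 'a \<Rightarrow> 'a \<Rightarrow> bool" for E where
  walk_nil: "walk E 0 x x"
| walk_cons: "E x y \<Longrightarrow> walk E n y z \<Longrightarrow> walk E (Suc n) x z"

definition gdist :: "('a \<Rightarrow> 'a \<Rightarrow> bool) \<Rightarrow> 'a \<Rightarrow> 'a \<Rightarrow> nat" where
  "gdist E x y = (LEAST n. walk E n x y)"

definition nbrs :: "'a set \<Rightarrow> ('a \<Rightarrow> 'a \<Rightarrow> bool) \<Rightarrow> 'a \<Rightarrow> 'a set" where
  "nbrs S E x = {y \<in> S. E x y}"

definition directed_moves :: "'a set \<Rightarrow> ('a \<Rightarrow> 'a \<Rightarrow> bool) \<Rightarrow> 'a \<Rightarrow> 'a \<Rightarrow> 'a set" where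
  "directed_moves S E c r = {z \<in> nbrs S E c. Suc (gdist E z r) = gdist E c r}"

(* Play c r b : cop at c, robber at r, b = True iff the robber makes the next move *)
datatype 'a gstate = Play 'a 'a bool | Caught

definition game_step :: "real \<Rightarrow> 'a set \<Rightarrow> ('a \<Rightarrow> 'a \<Rightarrow> bool) \<Rightarrow> 'a gstate \<Rightarrow> 'a gstate pmf" where
  "game_step \<theta> S E s = (case s of
      Caught \<Rightarrow> return_pmf Caught
    | Play c r robber_turn \<Rightarrow>
        (if robber_turn then
           map_pmf (\<lambda>r'. if r' = c then Caught else Play c r' False) (pmf_of_set (nbrs S E r))
         else
           map_pmf (\<lambda>c'. if c' = r then Caught else Play c' r True)
             (bernoulli_pmf \<theta> \<bind> (\<lambda>b. if b then pmf_of_set (nbrs S E c)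
                                           else pmf_of_set (directed_moves S E c r)))))"

definition game_dist :: "real \<Rightarrow> 'a set \<Rightarrow> ('a \<Rightarrow> 'a \<Rightarrow> bool) \<Rightarrow> 'a gstate \<Rightarrow> nat \<Rightarrow> 'a gstate pmf" where
  "game_dist \<theta> S E s0 n = ((\<lambda>p. p \<bind> game_step \<theta> S E) ^^ n) (return_pmf s0)"

definition caught_by :: "real \<Rightarrow> 'a set \<Rightarrow> ('a \<Rightarrow> 'a \<Rightarrow> bool) \<Rightarrow> 'a gstate \<Rightarrow> nat \<Rightarrow> real" where
  "caught_by \<theta> S E s0 n = pmf (game_dist \<theta> S E s0 n) Caught"

definition capture_at :: "real \<Rightarrow> 'a set \<Rightarrow> ('a \<Rightarrow> 'a \<Rightarrow> bool) \<Rightarrow> 'a gstate \<Rightarrow> nat \<Rightarrow> real" where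
  "capture_at \<theta> S E s0 n =
     (if n = 0 then caught_by \<theta> S E s0 0 else caught_by \<theta> S E s0 n - caught_by \<theta> S E s0 (n - 1))"

(* E[X] for X with values in nat \<union> {\<infinity>}: sum of n P(X=n) plus \<infinity> \<cdot> P(X=\<infinity>) *)
definition expected_capture_time :: "real \<Rightarrow> 'a set \<Rightarrow> ('a \<Rightarrow> 'a \<Rightarrow> bool) \<Rightarrow> 'a gstate \<Rightarrow> ennreal" where
  "expected_capture_time \<theta> S E s0 =
     (\<Sum>n. ennreal (real n * capture_at \<theta> S E s0 n))
     + (if (SUP n. ennreal (caught_by \<theta> S E s0 n)) < 1 then \<top> else 0)"

definition Kpart_V :: "nat \<Rightarrow> (nat + nat) set" where "Kpart_V v = Inl ` {..<v}"
definition Kpart_W :: "nat \<Rightarrow> (nat + nat) set" where "Kpart_W w = Inr ` {..<w}"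
definition Kverts :: "nat \<Rightarrow> nat \<Rightarrow> (nat + nat) set" where "Kverts v w = Kpart_V v \<union> Kpart_W w"
definition Kadj :: "nat \<Rightarrow> nat \<Rightarrow> (nat + nat) \<Rightarrow> (nat + nat) \<Rightarrow> bool" where
  "Kadj v w x y = ((x \<in> Kpart_V v \<and> y \<in> Kpart_W w) \<or> (x \<in> Kpart_W w \<and> y \<in> Kpart_V v))"

end

theory Submission
  imports Defs
begin



lemma funpow_bind:
  fixes g :: "'a \<Rightarrow> 'a pmf"
  shows "((\<lambda>p. p \<bind> g) ^^ n) q = q \<bind> (\<lambda>s. ((\<lambda>p. p \<bind> g) ^^ n) (return_pmf s))"
proof (induction n arbitrary: q)
  case 0 then show ?case by (simp add: bind_return_pmf')
next
  case (Suc n)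
  have "((\<lambda>p. p \<bind> g) ^^ Suc n) q = ((\<lambda>p. p \<bind> g) ^^ n) q \<bind> g" by simp
  also have "\<dots> = (q \<bind> (\<lambda>s. ((\<lambda>p. p \<bind> g) ^^ n) (return_pmf s))) \<bind> g" by (subst Suc.IH) (rule refl)
  also have "\<dots> = q \<bind> (\<lambda>s. ((\<lambda>p. p \<bind> g) ^^ n) (return_pmf s) \<bind> g)" by (rule bind_assoc_pmf)
  also have "\<dots> = q \<bind> (\<lambda>s. ((\<lambda>p. p \<bind> g) ^^ Suc n) (return_pmf s))" by simp
  finally show ?case .
qed

lemma game_dist_Suc:
  "game_dist \<theta> S E s (Suc n) = game_step \<theta> S E s \<bind> (\<lambda>s'. game_dist \<theta> S E s' n)"
  unfolding game_dist_def funpow_Suc_right o_def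
  by (subst funpow_bind) (simp add: bind_return_pmf)

lemma caught_by_Suc:
  "caught_by \<theta> S E s (Suc n) = measure_pmf.expectation (game_step \<theta> S E s) (\<lambda>s'. caught_by \<theta> S E s' n)"
  unfolding caught_by_def game_dist_Suc pmf_bind ..

lemma game_dist_Caught: "game_dist \<theta> S E Caught n = return_pmf Caught"
proof (induction n)
  case 0 then show ?case by (simp add: game_dist_def)
next
  case (Suc n) then show ?case
    by (simp add: game_dist_Suc game_step_def bind_return_pmf)
qed

lemma caught_Caught[simp]: "caught_by \<theta> S E Caught n = 1"
  unfolding caught_by_def game_dist_Caught by simp

lemma caught_Play0[simp]: "caught_by \<theta> S E (Play c r b) 0 = 0"
  unfolding caught_by_def game_dist_def by simp

lemma rob_step:
  assumes "finite (nbrs S E r)" "nbrs S E r \<noteq> {}"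
  shows "caught_by \<theta> S E (Play c r True) (Suc n) =
     (\<Sum>r'\<in>nbrs S E r. caught_by \<theta> S E (if r' = c then Caught else Play c r' False) n) / real (card (nbrs S E r))"
  unfolding caught_by_Suc using assms
  by (simp add: game_step_def integral_pmf_of_set)

lemma cop_step:
  assumes "finite (nbrs S E c)" "nbrs S E c \<noteq> {}"
    and "finite (directed_moves S E c r)" "directed_moves S E c r \<noteq> {}"
    and "0 \<le> \<theta>" "\<theta> \<le> 1"
  shows "caught_by \<theta> S E (Play c r False) (Suc n) =
     \<theta> * ((\<Sum>c'\<in>nbrs S E c. caught_by \<theta> S E (if c' = r then Caught else Play c' r True) n) / real (card (nbrs S E c)))
   + (1 - \<theta>) * ((\<Sum>c'\<in>directed_moves S E c r. caught_by \<theta> S E (if c' = r then Caught else Play c' r True) n) / real (card (directed_moves S E c r)))"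
proof -
  let ?k = "\<lambda>b. if b then pmf_of_set (nbrs S E c) else pmf_of_set (directed_moves S E c r)"
  let ?g = "\<lambda>c'. caught_by \<theta> S E (if c' = r then Caught else Play c' r True) n"
  have "caught_by \<theta> S E (Play c r False) (Suc n) = measure_pmf.expectation (bernoulli_pmf \<theta> \<bind> ?k) ?g"
    unfolding caught_by_Suc by (simp add: game_step_def if_distrib)
  also have "\<dots> = (\<Sum>b\<in>UNIV. pmf (bernoulli_pmf \<theta>) b *\<^sub>R measure_pmf.expectation (?k b) ?g)"
    by (rule pmf_expectation_bind) (use assms in auto)
  also have "\<dots> = \<theta> * measure_pmf.expectation (?k True) ?g + (1 - \<theta>) * measure_pmf.expectation (?k False) ?g"
    using assms by (simp add: UNIV_bool)
  finally show ?thesis using assms by (simp add: integral_pmf_of_set)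
qed




lemma walk0: "walk E 0 x y \<Longrightarrow> x = y"
  by (erule walk.cases) auto

lemma walk1: "walk E (Suc 0) x y \<Longrightarrow> E x y"
  by (erule walk.cases) (auto dest: walk0)

lemma gdist0[simp]: "gdist E x x = 0"
  unfolding gdist_def by (rule Least_eq_0) (rule walk_nil)

lemma gdist1: "E x y \<Longrightarrow> x \<noteq> y \<Longrightarrow> gdist E x y = 1"
  unfolding gdist_def
proof (rule Least_equality)
  assume "E x y" then show "walk E 1 x y" by (auto intro: walk.intros)
next
  fix m assume "x \<noteq> y" "walk E m x y" then show "1 \<le> m"
    by (cases m) (auto dest: walk0)
qed

lemma gdist2: "x \<noteq> y \<Longrightarrow> \<not> E x y \<Longrightarrow> E x z \<Longrightarrow> E z y \<Longrightarrow> gdist E x y = 2"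
  unfolding gdist_def
proof (rule Least_equality)
  assume "E x z" "E z y" then show "walk E 2 x y"
    by (auto intro!: walk.intros simp: numeral_2_eq_2)
next
  fix m assume "x \<noteq> y" "\<not> E x y" "walk E m x y" then show "2 \<le> m"
  proof (cases m)
    case 0 then show ?thesis using \<open>x \<noteq> y\<close> \<open>walk E m x y\<close> by (auto dest: walk0)
  next
    case (Suc k) then show ?thesis using \<open>\<not> E x y\<close> \<open>walk E m x y\<close>
      by (cases k) (auto dest: walk1)
  qed
qed

lemma sum_if_eq:
  assumes "finite A" "a \<in> A"
  shows "(\<Sum>r\<in>A. if r = a then L else K) = L + (real (card A) - 1) * (K::real)"
proof -
  have "(\<Sum>r\<in>A. if r = a then L else K) = L + (\<Sum>r\<in>A-{a}. if r = a then L else K)"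
    using assms by (simp add: sum.remove)
  also have "(\<Sum>r\<in>A-{a}. if r = a then L else K) = (\<Sum>r\<in>A-{a}. K)" by (rule sum.cong) auto
  also have "\<dots> = (real (card A) - 1) * K" using assms
    by (simp add: card_Diff_singleton)
       (metis One_nat_def Suc_leI assms(1,2) card_gt_0_iff empty_iff of_nat_1 of_nat_diff)
  finally show ?thesis .
qed

locale bip =
  fixes A B :: "'a set" and E :: "'a \<Rightarrow> 'a \<Rightarrow> bool" and S :: "'a set"
  assumes finA: "finite A" and finB: "finite B" and neA: "A \<noteq> {}" and neB: "B \<noteq> {}"
    and disj: "A \<inter> B = {}" and E_iff: "\<And>x y. E x y \<longleftrightarrow> (x \<in> A \<and> y \<in> B) \<or> (x \<in> B \<and> y \<in> A)"
    and S_eq: "S = A \<union> B"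
begin

lemma nbrsA: "a \<in> A \<Longrightarrow> nbrs S E a = B"
  unfolding nbrs_def S_eq using E_iff disj by auto

lemma dirAB: assumes a: "a \<in> A" and b: "b \<in> B" shows "directed_moves S E a b = {b}"
proof -
  have ab: "gdist E a b = 1" using a b disj by (intro gdist1) (auto simp: E_iff)
  have "z \<in> B \<Longrightarrow> z \<noteq> b \<Longrightarrow> gdist E z b = 2" for z
    using a b disj by (intro gdist2[of z b E a]) (auto simp: E_iff)
  then show ?thesis unfolding directed_moves_def nbrsA[OF a] ab using b by fastforce
qed

lemma dirAA: assumes a: "a \<in> A" and b: "b \<in> A" and ab: "a \<noteq> b" shows "directed_moves S E a b = B"
proof -
  obtain z0 where z0: "z0 \<in> B" using neB by auto
  have ab2: "gdist E a b = 2" using a b ab disj z0 by (intro gdist2[of a b E z0]) (auto simp: E_iff)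
  have "z \<in> B \<Longrightarrow> gdist E z b = 1" for z
    using b disj by (intro gdist1) (auto simp: E_iff)
  then show ?thesis unfolding directed_moves_def nbrsA[OF a] ab2 by auto
qed

lemma stepR: assumes "b \<in> A"
  shows "caught_by \<theta> S E (Play c b True) (Suc n) =
     (\<Sum>r'\<in>B. caught_by \<theta> S E (if r' = c then Caught else Play c r' False) n) / real (card B)"
  using rob_step[of S E b \<theta> c n] nbrsA[OF assms] finB neB by simp

lemma stepC_same: assumes a: "a \<in> A" and b: "b \<in> A" and ab: "a \<noteq> b" and th: "0 \<le> \<theta>" "\<theta> \<le> 1"
  shows "caught_by \<theta> S E (Play a b False) (Suc n) =
     (\<Sum>c'\<in>B. caught_by \<theta> S E (Play c' b True) n) / real (card B)"
proof -
  have e: "(\<Sum>c'\<in>B. caught_by \<theta> S E (if c' = b then Caught else Play c' b True) n) =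
           (\<Sum>c'\<in>B. caught_by \<theta> S E (Play c' b True) n)"
    using b disj by (intro sum.cong) auto
  show ?thesis using cop_step[of S E a b \<theta> n] nbrsA[OF a] dirAA[OF a b ab] finB neB th
    by (simp add: e diff_divide_distrib[symmetric] add_divide_distrib[symmetric] algebra_simps)
qed

lemma stepC_adj: assumes a: "a \<in> A" and b: "b \<in> B" and th: "0 \<le> \<theta>" "\<theta> \<le> 1"
  shows "caught_by \<theta> S E (Play a b False) (Suc n) =
     \<theta> * ((\<Sum>c'\<in>B. caught_by \<theta> S E (if c' = b then Caught else Play c' b True) n) / real (card B))
     + (1 - \<theta>)"
  using cop_step[of S E a b \<theta> n] nbrsA[OF a] dirAB[OF a b] finB neB th by simp

end




fun U :: "(nat \<Rightarrow> real) \<Rightarrow> nat \<Rightarrow> nat \<Rightarrow> real" where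
  "U f c 0 = 1"
| "U f c (Suc n) = f c * U f (Suc c mod 4) n"

locale fac =
  fixes f :: "nat \<Rightarrow> real"
  assumes f0: "\<And>i. 0 \<le> f i" and f1: "\<And>i. f i \<le> 1" and x1: "f 0 * f 1 * f 2 * f 3 < 1"
begin

lemma U_nonneg: "0 \<le> U f c n"
  by (induction n arbitrary: c) (auto intro!: mult_nonneg_nonneg f0)

lemma U_le1: "U f c n \<le> 1"
  by (induction n arbitrary: c) (auto intro!: mult_le_one f0 f1 U_nonneg)

lemma U_mono: "U f c (Suc n) \<le> U f c n"
proof (induction n arbitrary: c)
  case 0 then show ?case using f1 by simp
next
  case (Suc n)
  have "U f c (Suc (Suc n)) = f c * U f (Suc c mod 4) (Suc n)" by (simp only: U.simps)
  also have "\<dots> \<le> f c * U f (Suc c mod 4) n" using Suc f0 by (intro mult_left_mono) auto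
  also have "\<dots> = U f c (Suc n)" by simp
  finally show ?case .
qed

lemma U_antimono: "m \<le> n \<Longrightarrow> U f c n \<le> U f c m"
proof (induction n rule: dec_induct)
  case (step n) then show ?case using U_mono[of c n] by linarith
qed simp

definition x where "x = f 0 * f 1 * f 2 * f 3"

lemma x_nonneg: "0 \<le> x" unfolding x_def by (simp add: f0)
lemma x_less: "x < 1" unfolding x_def using x1 .

lemma U4: "c < 4 \<Longrightarrow> U f c (Suc (Suc (Suc (Suc n)))) = x * U f c n"
proof -
  assume "c < 4"
  then have "c = 0 \<or> c = 1 \<or> c = 2 \<or> c = 3" by arith
  moreover have m: "Suc 0 mod 4 = (1::nat)" "Suc 1 mod 4 = (2::nat)" "Suc 2 mod 4 = (3::nat)" "Suc 3 mod 4 = (0::nat)" by simp_all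
  ultimately show ?thesis unfolding x_def
    by (elim disjE) (simp only: U.simps m, simp only: mult_ac)+
qed

lemma U4k: "c < 4 \<Longrightarrow> U f c (4 * k + j) = x ^ k * U f c j"
proof (induction k)
  case 0 then show ?case by simp
next
  case (Suc k)
  have "4 * Suc k + j = Suc (Suc (Suc (Suc (4 * k + j))))" by simp
  then show ?case using Suc U4[OF Suc.prems, of "4*k+j"] by (simp only:) simp
qed

definition S where "S c = (\<Sum>j<4. U f c j)"

lemma partial4: "c < 4 \<Longrightarrow> (\<Sum>n<4*N. U f c n) = S c * (\<Sum>k<N. x ^ k)"
proof (induction N)
  case 0 then show ?case by simp
next
  case (Suc N)
  have e: "4 * Suc N = Suc (Suc (Suc (Suc (4*N))))" by simp
  have "(\<Sum>n<4*Suc N. U f c n) = (\<Sum>n<4*N. U f c n) + (U f c (4*N+0) + U f c (4*N+1) + U f c (4*N+2) + U f c (4*N+3))"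
    unfolding e sum.lessThan_Suc by (simp add: algebra_simps numeral_3_eq_3 del: U.simps)
  also have "(U f c (4*N+0) + U f c (4*N+1) + U f c (4*N+2) + U f c (4*N+3)) = x ^ N * S c"
  proof -
    have l: "{..<4::nat} = {0,1,2,3}" by auto
    show ?thesis unfolding U4k[OF Suc.prems] S_def l by (simp add: algebra_simps del: U.simps)
  qed
  finally show ?case using Suc by (simp add: algebra_simps)
qed

lemma geo: "(\<lambda>N. \<Sum>k<N. x ^ k) \<longlonglongrightarrow> 1 / (1 - x)"
  using geometric_sums[of x] x_nonneg x_less by (simp add: sums_def)

lemma S_nonneg: "0 \<le> S c" unfolding S_def by (simp add: U_nonneg sum_nonneg)

lemma partial_le: "c < 4 \<Longrightarrow> (\<Sum>n<M. U f c n) \<le> S c / (1 - x)"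
proof -
  assume c: "c < 4"
  have "(\<Sum>n<M. U f c n) \<le> (\<Sum>n<4*M. U f c n)"
    by (rule sum_mono2) (auto simp: U_nonneg)
  also have "\<dots> = S c * (\<Sum>k<M. x ^ k)" using partial4 c by simp
  also have "(\<Sum>k<M. x ^ k) = (1 - x ^ M) / (1 - x)"
    using sum_gp_strict[of x M] x_less by simp
  also have "S c * ((1 - x ^ M) / (1 - x)) \<le> S c * (1 / (1 - x))"
    using x_less x_nonneg S_nonneg
    by (intro mult_left_mono divide_right_mono) auto
  finally show ?thesis by simp
qed

lemma U_summable: "c < 4 \<Longrightarrow> summable (U f c)"
  by (rule summableI_nonneg_bounded[OF U_nonneg partial_le])

lemma U_suminf: assumes c: "c < 4" shows "(\<Sum>n. U f c n) = S c / (1 - x)"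
proof -
  have "(\<lambda>n. \<Sum>i<n. U f c i) \<longlonglongrightarrow> (\<Sum>n. U f c n)"
    using summable_LIMSEQ[OF U_summable[OF c]] .
  from LIMSEQ_subseq_LIMSEQ[OF this, of "\<lambda>N. 4*N"]
  have a: "(\<lambda>N. \<Sum>i<4*N. U f c i) \<longlonglongrightarrow> (\<Sum>n. U f c n)"
    by (simp add: strict_mono_def o_def)
  have b: "(\<lambda>N. \<Sum>i<4*N. U f c i) \<longlonglongrightarrow> S c * (1 / (1 - x))"
    unfolding partial4[OF c] by (intro tendsto_mult tendsto_const geo)
  from LIMSEQ_unique[OF a b] show ?thesis by simp
qed


lemma expect:
  assumes c: "c < 4" and cb: "\<And>n. caught_by \<theta> Sg Eg s n = 1 - U f c n"
  shows "expected_capture_time \<theta> Sg Eg s = ennreal (S c / (1 - x))"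
proof -
  let ?u = "U f c"
  define h where "h n = real n * capture_at \<theta> Sg Eg s n" for n
  have h_eq: "h n = real n * (if n = 0 then 0 else ?u (n - 1) - ?u n)" for n
    unfolding h_def capture_at_def cb by auto
  have h_nonneg: "0 \<le> h n" for n
    unfolding h_eq using U_mono[of c "n - 1"] by (cases n) auto
  have P: "(\<Sum>n<Suc N. h n) = (\<Sum>n<N. ?u n) - real N * ?u N" for N
  proof (induction N)
    case 0 then show ?case by (simp add: h_eq)
  next
    case (Suc N)
    have "(\<Sum>n<Suc (Suc N). h n) = (\<Sum>n<Suc N. h n) + h (Suc N)" by simp
    also have "\<dots> = (\<Sum>n<N. ?u n) - real N * ?u N + real (Suc N) * (?u N - ?u (Suc N))"
      using Suc by (simp add: h_eq del: U.simps)
    also have "\<dots> = (\<Sum>n<Suc N. ?u n) - real (Suc N) * ?u (Suc N)"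
      by (simp add: algebra_simps del: U.simps)
    finally show ?case .
  qed
  have sumU: "summable ?u" using U_summable[OF c] .
  have hb: "(\<Sum>n<N. h n) \<le> (\<Sum>n. ?u n)" for N
  proof (cases N)
    case 0 then show ?thesis using suminf_nonneg[OF sumU U_nonneg] by simp
  next
    case (Suc M)
    have "(\<Sum>n<N. h n) \<le> (\<Sum>n<M. ?u n)"
      unfolding Suc P using U_nonneg[of c M] by simp
    also have "\<dots> \<le> (\<Sum>n. ?u n)" by (rule sum_le_suminf[OF sumU]) (auto simp: U_nonneg)
    finally show ?thesis .
  qed
  have sumh: "summable h" by (rule summableI_nonneg_bounded[OF h_nonneg hb])
  have l1: "(\<lambda>n. \<Sum>i<n. h i) \<longlonglongrightarrow> (\<Sum>n. h n)" using summable_LIMSEQ[OF sumh] .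
  from LIMSEQ_subseq_LIMSEQ[OF l1, of "\<lambda>M. Suc (4*M)"]
  have a: "(\<lambda>M. \<Sum>i<Suc (4*M). h i) \<longlonglongrightarrow> (\<Sum>n. h n)"
    by (simp add: strict_mono_def o_def)
  have uq: "?u (4*M) = x ^ M" for M using U4k[OF c, of M 0] by simp
  have e2: "(\<Sum>i<Suc (4*M). h i) = (\<Sum>n<4*M. ?u n) - 4 * (real M * x ^ M)" for M
    unfolding P uq by simp
  have q: "(\<lambda>M. \<Sum>n<4*M. ?u n) \<longlonglongrightarrow> (\<Sum>n. ?u n)"
    using LIMSEQ_subseq_LIMSEQ[OF summable_LIMSEQ[OF sumU], of "\<lambda>N. 4*N"]
    by (simp add: strict_mono_def o_def)
  have z: "(\<lambda>M. real M * x ^ M) \<longlonglongrightarrow> 0"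
    using powser_times_n_limit_0[of x] x_nonneg x_less by simp
  have b: "(\<lambda>M. \<Sum>i<Suc (4*M). h i) \<longlonglongrightarrow> (\<Sum>n. ?u n) - 4 * 0"
    unfolding e2 by (intro tendsto_diff tendsto_mult tendsto_const q z)
  have hs: "(\<Sum>n. h n) = (\<Sum>n. ?u n)" using LIMSEQ_unique[OF a b] by simp
  have part1: "(\<Sum>n. ennreal (real n * capture_at \<theta> Sg Eg s n)) = ennreal (S c / (1 - x))"
    using suminf_ennreal2[OF h_nonneg sumh] hs U_suminf[OF c] unfolding h_def by simp
  have u0: "?u \<longlonglongrightarrow> 0" using summable_LIMSEQ_zero[OF sumU] .
  have inc: "incseq (\<lambda>n. ennreal (caught_by \<theta> Sg Eg s n))"
    unfolding incseq_def cb by (auto intro!: ennreal_leI U_antimono)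
  have "(\<lambda>n. ennreal (caught_by \<theta> Sg Eg s n)) \<longlonglongrightarrow> ennreal (1 - 0)"
    unfolding cb by (intro tendsto_ennrealI tendsto_diff tendsto_const u0)
  with LIMSEQ_SUP[OF inc] have "(SUP n. ennreal (caught_by \<theta> Sg Eg s n)) = 1"
    using LIMSEQ_unique by fastforce
  then show ?thesis unfolding expected_capture_time_def part1 by simp
qed

end




lemma Usuc[simp]: "U f 0 (Suc n) = f 0 * U f 1 n" "U f 1 (Suc n) = f 1 * U f 2 n"
  "U f 2 (Suc n) = f 2 * U f 3 n" "U f 3 (Suc n) = f 3 * U f 0 n"
proof -
  have m: "Suc 0 mod 4 = (1::nat)" "Suc 1 mod 4 = (2::nat)" "Suc 2 mod 4 = (3::nat)" "Suc 3 mod 4 = (0::nat)" by simp_all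
  show "U f 0 (Suc n) = f 0 * U f 1 n" "U f 1 (Suc n) = f 1 * U f 2 n"
    "U f 2 (Suc n) = f 2 * U f 3 n" "U f 3 (Suc n) = f 3 * U f 0 n"
    by (simp only: U.simps m)+
qed

lemma Usuc1[simp]: "U f (Suc 0) (Suc n) = f 1 * U f 2 n"
  using Usuc(2) by (simp only: One_nat_def)

lemma alg1: "0 < v \<Longrightarrow> (1 + (real v - 1) * (1 - y)) / real v = 1 - (1 - 1 / real v) * y"
  by (simp add: field_simps)

declare U.simps(2)[simp del]

lemma alg_p: assumes V: "1 \<le> V" and W: "1 \<le> (W::real)"
  shows "(1 + 2 * (1 - 1 / V) + (1 - 1 / V) * (1 - 1 / W)) / (1 - (1 - 1 / V) * (1 - 1 / W))
       = (4 * V * W - 3 * W - V + 1) / (V + W - 1)"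
proof -
  have n: "1 + 2 * (1 - 1 / V) + (1 - 1 / V) * (1 - 1 / W) = (4 * V * W - 3 * W - V + 1) / (V * W)"
    using V W by (simp add: field_simps)
  have d: "1 - (1 - 1 / V) * (1 - 1 / W) = (V + W - 1) / (V * W)"
    using V W by (simp add: field_simps)
  have "V * W \<noteq> 0" "V + W - 1 \<noteq> 0" using V W by auto
  then show ?thesis unfolding n d by simp
qed

lemma alg_q: assumes V: "1 \<le> V" and W: "1 \<le> (W::real)" and t: "0 \<le> t" "t \<le> 1"
  shows "(2 + 2 * (t * (1 - 1 / W))) / (1 - t * (1 - 1 / W) * (t * (1 - 1 / V)))
       = 2 * (V * W + t * V * (W - 1)) / (V * W - t^2 * (V - 1) * (W - 1))"
proof -
  have n: "2 + 2 * (t * (1 - 1 / W)) = 2 * (V * W + t * V * (W - 1)) / (V * W)"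
    using V W by (simp add: field_simps)
  have d: "1 - t * (1 - 1 / W) * (t * (1 - 1 / V)) = (V * W - t^2 * (V - 1) * (W - 1)) / (V * W)"
    using V W by (simp add: field_simps power2_eq_square)
  have "V * W \<noteq> 0" using V W by auto
  then show ?thesis unfolding n d by simp
qed

lemma cardV: "card (Kpart_V v) = v" unfolding Kpart_V_def by (simp add: card_image)
lemma cardW: "card (Kpart_W w) = w" unfolding Kpart_W_def by (simp add: card_image)

lemma bipVW: "0 < v \<Longrightarrow> 0 < w \<Longrightarrow> bip (Kpart_V v) (Kpart_W w) (Kadj v w) (Kverts v w)"
  unfolding bip_def Kverts_def by (auto simp: Kadj_def Kpart_V_def Kpart_W_def)

lemma bipWV: "0 < v \<Longrightarrow> 0 < w \<Longrightarrow> bip (Kpart_W w) (Kpart_V v) (Kadj v w) (Kverts v w)"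
  unfolding bip_def Kverts_def by (auto simp: Kadj_def Kpart_V_def Kpart_W_def)

context
  fixes v w :: nat and \<theta> :: real
  assumes v: "0 < v" and w: "0 < w" and th0: "0 \<le> \<theta>" and th1: "\<theta> \<le> 1"
begin

interpretation VW: bip "Kpart_V v" "Kpart_W w" "Kadj v w" "Kverts v w" using bipVW[OF v w] .
interpretation WV: bip "Kpart_W w" "Kpart_V v" "Kadj v w" "Kverts v w" using bipWV[OF v w] .

abbreviation "cb s n \<equiv> caught_by \<theta> (Kverts v w) (Kadj v w) s n"
abbreviation "V \<equiv> Kpart_V v"
abbreviation "W \<equiv> Kpart_W w"

definition f1 :: "nat \<Rightarrow> real" where
  "f1 i = (if i = 0 then 1 - 1 / real v else if i = 2 then 1 - 1 / real w else 1)"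

lemma chain1:
  "(\<forall>a\<in>V. \<forall>b\<in>W. cb (Play a b True) n = 1 - U f1 0 n)
 \<and> (\<forall>a\<in>V. \<forall>b\<in>V. a \<noteq> b \<longrightarrow> cb (Play a b False) n = 1 - U f1 1 n)
 \<and> (\<forall>a\<in>W. \<forall>b\<in>V. cb (Play a b True) n = 1 - U f1 2 n)
 \<and> (\<forall>a\<in>W. \<forall>b\<in>W. a \<noteq> b \<longrightarrow> cb (Play a b False) n = 1 - U f1 3 n)"
proof (induction n)
  case 0 then show ?case by simp
next
  case (Suc n)
  note IH = Suc.IH
  have c0: "cb (Play a b True) (Suc n) = 1 - U f1 0 (Suc n)" if a: "a \<in> V" and b: "b \<in> W" for a b
  proof -
    have "cb (Play a b True) (Suc n) = (\<Sum>r'\<in>V. cb (if r' = a then Caught else Play a r' False) n) / real v"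
      using WV.stepR[OF b] cardV by simp
    also have "(\<Sum>r'\<in>V. cb (if r' = a then Caught else Play a r' False) n)
        = (\<Sum>r'\<in>V. if r' = a then 1 else 1 - U f1 1 n)"
      using IH a by (intro sum.cong) auto
    also have "\<dots> = 1 + (real v - 1) * (1 - U f1 1 n)"
      using sum_if_eq[OF VW.finA a] cardV by simp
    finally show ?thesis using v by (simp add: f1_def alg1)
  qed
  have c1: "cb (Play a b False) (Suc n) = 1 - U f1 1 (Suc n)" if a: "a \<in> V" and b: "b \<in> V" and ab: "a \<noteq> b" for a b
  proof -
    have "cb (Play a b False) (Suc n) = (\<Sum>c'\<in>W. cb (Play c' b True) n) / real w"
      using VW.stepC_same[OF a b ab th0 th1] cardW by simp
    also have "(\<Sum>c'\<in>W. cb (Play c' b True) n) = (\<Sum>c'\<in>W. 1 - U f1 2 n)"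
      using IH b by (intro sum.cong) auto
    finally show ?thesis using w by (simp add: f1_def cardW)
  qed
  have c2: "cb (Play a b True) (Suc n) = 1 - U f1 2 (Suc n)" if a: "a \<in> W" and b: "b \<in> V" for a b
  proof -
    have "cb (Play a b True) (Suc n) = (\<Sum>r'\<in>W. cb (if r' = a then Caught else Play a r' False) n) / real w"
      using VW.stepR[OF b] cardW by simp
    also have "(\<Sum>r'\<in>W. cb (if r' = a then Caught else Play a r' False) n)
        = (\<Sum>r'\<in>W. if r' = a then 1 else 1 - U f1 3 n)"
      using IH a by (intro sum.cong) auto
    also have "\<dots> = 1 + (real w - 1) * (1 - U f1 3 n)"
      using sum_if_eq[OF WV.finA a] cardW by simp
    finally show ?thesis using w by (simp add: f1_def alg1)
  qed
  have c3: "cb (Play a b False) (Suc n) = 1 - U f1 3 (Suc n)" if a: "a \<in> W" and b: "b \<in> W" and ab: "a \<noteq> b" for a b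
  proof -
    have "cb (Play a b False) (Suc n) = (\<Sum>c'\<in>V. cb (Play c' b True) n) / real v"
      using WV.stepC_same[OF a b ab th0 th1] cardV by simp
    also have "(\<Sum>c'\<in>V. cb (Play c' b True) n) = (\<Sum>c'\<in>V. 1 - U f1 0 n)"
      using IH b by (intro sum.cong) auto
    finally show ?thesis using v by (simp add: f1_def cardV)
  qed
  show ?case using c0 c1 c2 c3 by blast
qed

definition f2 :: "nat \<Rightarrow> real" where
  "f2 i = (if i = 1 then \<theta> * (1 - 1 / real w) else if i = 3 then \<theta> * (1 - 1 / real v) else 1)"

lemma chain2:
  "(\<forall>a\<in>V. \<forall>b\<in>V. a \<noteq> b \<longrightarrow> cb (Play a b True) n = 1 - U f2 0 n)
 \<and> (\<forall>a\<in>V. \<forall>b\<in>W. cb (Play a b False) n = 1 - U f2 1 n)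
 \<and> (\<forall>a\<in>W. \<forall>b\<in>W. a \<noteq> b \<longrightarrow> cb (Play a b True) n = 1 - U f2 2 n)
 \<and> (\<forall>a\<in>W. \<forall>b\<in>V. cb (Play a b False) n = 1 - U f2 3 n)"
proof (induction n)
  case 0 then show ?case by simp
next
  case (Suc n)
  note IH = Suc.IH
  have c0: "cb (Play a b True) (Suc n) = 1 - U f2 0 (Suc n)" if a: "a \<in> V" and b: "b \<in> V" and ab: "a \<noteq> b" for a b
  proof -
    have "cb (Play a b True) (Suc n) = (\<Sum>r'\<in>W. cb (if r' = a then Caught else Play a r' False) n) / real w"
      using VW.stepR[OF b] cardW by simp
    also have "(\<Sum>r'\<in>W. cb (if r' = a then Caught else Play a r' False) n) = (\<Sum>r'\<in>W. 1 - U f2 1 n)"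
      using IH a VW.disj by (intro sum.cong) auto
    finally show ?thesis using w by (simp add: f2_def cardW)
  qed
  have c1: "cb (Play a b False) (Suc n) = 1 - U f2 1 (Suc n)" if a: "a \<in> V" and b: "b \<in> W" for a b
  proof -
    have "cb (Play a b False) (Suc n) = \<theta> * ((\<Sum>c'\<in>W. cb (if c' = b then Caught else Play c' b True) n) / real w) + (1 - \<theta>)"
      using VW.stepC_adj[OF a b th0 th1] cardW by simp
    also have "(\<Sum>c'\<in>W. cb (if c' = b then Caught else Play c' b True) n)
        = (\<Sum>c'\<in>W. if c' = b then 1 else 1 - U f2 2 n)"
      using IH b by (intro sum.cong) auto
    also have "\<dots> = 1 + (real w - 1) * (1 - U f2 2 n)"
      using sum_if_eq[OF VW.finB b] cardW by simp
    also have "\<theta> * ((1 + (real w - 1) * (1 - U f2 2 n)) / real w) = \<theta> * (1 - (1 - 1 / real w) * U f2 2 n)"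
      by (simp only: alg1[OF w])
    finally show ?thesis by (simp add: f2_def algebra_simps)
  qed
  have c2: "cb (Play a b True) (Suc n) = 1 - U f2 2 (Suc n)" if a: "a \<in> W" and b: "b \<in> W" and ab: "a \<noteq> b" for a b
  proof -
    have "cb (Play a b True) (Suc n) = (\<Sum>r'\<in>V. cb (if r' = a then Caught else Play a r' False) n) / real v"
      using WV.stepR[OF b] cardV by simp
    also have "(\<Sum>r'\<in>V. cb (if r' = a then Caught else Play a r' False) n) = (\<Sum>r'\<in>V. 1 - U f2 3 n)"
      using IH a VW.disj by (intro sum.cong) auto
    finally show ?thesis using v by (simp add: f2_def cardV)
  qed
  have c3: "cb (Play a b False) (Suc n) = 1 - U f2 3 (Suc n)" if a: "a \<in> W" and b: "b \<in> V" for a b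
  proof -
    have "cb (Play a b False) (Suc n) = \<theta> * ((\<Sum>c'\<in>V. cb (if c' = b then Caught else Play c' b True) n) / real v) + (1 - \<theta>)"
      using WV.stepC_adj[OF a b th0 th1] cardV by simp
    also have "(\<Sum>c'\<in>V. cb (if c' = b then Caught else Play c' b True) n)
        = (\<Sum>c'\<in>V. if c' = b then 1 else 1 - U f2 0 n)"
      using IH b by (intro sum.cong) auto
    also have "\<dots> = 1 + (real v - 1) * (1 - U f2 0 n)"
      using sum_if_eq[OF VW.finA b] cardV by simp
    also have "\<theta> * ((1 + (real v - 1) * (1 - U f2 0 n)) / real v) = \<theta> * (1 - (1 - 1 / real v) * U f2 0 n)"
      by (simp only: alg1[OF v])
    finally show ?thesis by (simp add: f2_def algebra_simps)
  qed
  show ?case using c0 c1 c2 c3 by blast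
qed

lemma fac1: "fac f1"
proof
  fix i
  have "1 / real v \<le> 1" "1 / real w \<le> 1" using v w by auto
  then show "0 \<le> f1 i" "f1 i \<le> 1" unfolding f1_def by auto
next
  have a: "0 < 1 / real v" using v by simp
  have "1 / real w \<le> 1" using w by auto
  then have "(1 - 1 / real v) * (1 - 1 / real w) \<le> (1 - 1 / real v)"
    using a v by (intro mult_left_le) (auto simp: field_simps)
  then have "(1 - 1 / real v) * (1 - 1 / real w) < 1" using a by linarith
  then show "f1 0 * f1 1 * f1 2 * f1 3 < 1" unfolding f1_def by simp
qed

lemma fac2: "fac f2"
proof
  fix i
  have "1 / real v \<le> 1" "1 / real w \<le> 1" using v w by auto
  then show "0 \<le> f2 i" "f2 i \<le> 1" unfolding f2_def using th0 th1
    by (auto intro: mult_le_one)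
next
  have a: "0 < 1 / real w" using w by simp
  have b: "1 / real v \<le> 1" "1 / real w \<le> 1" using v w by auto
  have "\<theta> * (1 - 1 / real w) \<le> (1 - 1 / real w)"
    using mult_right_mono[of \<theta> 1 "1 - 1 / real w"] th1 b by simp
  then have "\<theta> * (1 - 1 / real w) < 1" using a by linarith
  moreover have "0 \<le> \<theta> * (1 - 1 / real v)" "\<theta> * (1 - 1 / real v) \<le> 1" "0 \<le> \<theta> * (1 - 1 / real w)"
    using th0 th1 b by (auto intro: mult_le_one)
  ultimately have "\<theta> * (1 - 1 / real w) * (\<theta> * (1 - 1 / real v)) < 1"
    by (smt (verit) mult_left_le)
  then show "f2 0 * f2 1 * f2 2 * f2 3 < 1" unfolding f2_def by simp
qed

lemma four: "{..<4::nat} = {0, Suc 0, Suc (Suc 0), Suc (Suc (Suc 0))}" by auto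

lemma pos1: "a \<in> V \<Longrightarrow> b \<in> W \<Longrightarrow>
  expected_capture_time \<theta> (Kverts v w) (Kadj v w) (Play a b True)
       = ennreal ((4 * real v * real w - 3 * real w - real v + 1) / (real v + real w - 1))"
proof -
  assume a: "a \<in> V" and b: "b \<in> W"
  have "expected_capture_time \<theta> (Kverts v w) (Kadj v w) (Play a b True) = ennreal (fac.S f1 0 / (1 - fac.x f1))"
    by (rule fac.expect[OF fac1]) (use chain1 a b in auto)
  also have "fac.S f1 0 / (1 - fac.x f1) = (4 * real v * real w - 3 * real w - real v + 1) / (real v + real w - 1)"
  proof -
    have "fac.S f1 0 = 1 + 2 * (1 - 1 / real v) + (1 - 1 / real v) * (1 - 1 / real w)"
      unfolding fac.S_def[OF fac1] four by (simp add: f1_def)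
    moreover have "fac.x f1 = (1 - 1 / real v) * (1 - 1 / real w)"
      unfolding fac.x_def[OF fac1] by (simp add: f1_def)
    ultimately show ?thesis using alg_p[of "real v" "real w"] v w by simp
  qed
  finally show ?thesis .
qed

lemma pos3: "a \<in> W \<Longrightarrow> b \<in> V \<Longrightarrow>
  expected_capture_time \<theta> (Kverts v w) (Kadj v w) (Play a b True)
       = ennreal ((4 * real v * real w - 3 * real v - real w + 1) / (real v + real w - 1))"
proof -
  assume a: "a \<in> W" and b: "b \<in> V"
  have "expected_capture_time \<theta> (Kverts v w) (Kadj v w) (Play a b True) = ennreal (fac.S f1 2 / (1 - fac.x f1))"
    by (rule fac.expect[OF fac1]) (use chain1 a b in auto)
  also have "fac.S f1 2 / (1 - fac.x f1) = (4 * real v * real w - 3 * real v - real w + 1) / (real v + real w - 1)"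
  proof -
    have "fac.S f1 2 = 1 + 2 * (1 - 1 / real w) + (1 - 1 / real w) * (1 - 1 / real v)"
      unfolding fac.S_def[OF fac1] four by (simp add: f1_def)
    moreover have "fac.x f1 = (1 - 1 / real w) * (1 - 1 / real v)"
      unfolding fac.x_def[OF fac1] by (simp add: f1_def)
    moreover have "(4 * real w * real v - 3 * real v - real w + 1) / (real w + real v - 1)
       = (4 * real v * real w - 3 * real v - real w + 1) / (real v + real w - 1)"
      by (simp add: algebra_simps)
    ultimately show ?thesis using alg_p[of "real w" "real v"] v w by simp
  qed
  finally show ?thesis .
qed

lemma pos2: "a \<in> V \<Longrightarrow> b \<in> V \<Longrightarrow> a \<noteq> b \<Longrightarrow>
  expected_capture_time \<theta> (Kverts v w) (Kadj v w) (Play a b True)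
       = ennreal (2 * (real v * real w + \<theta> * real v * (real w - 1))
                  / (real v * real w - \<theta>^2 * (real v - 1) * (real w - 1)))"
proof -
  assume a: "a \<in> V" and b: "b \<in> V" and ab: "a \<noteq> b"
  have "expected_capture_time \<theta> (Kverts v w) (Kadj v w) (Play a b True) = ennreal (fac.S f2 0 / (1 - fac.x f2))"
    by (rule fac.expect[OF fac2]) (use chain2 a b ab in auto)
  also have "fac.S f2 0 / (1 - fac.x f2) = 2 * (real v * real w + \<theta> * real v * (real w - 1))
                  / (real v * real w - \<theta>^2 * (real v - 1) * (real w - 1))"
  proof -
    have "fac.S f2 0 = 2 + 2 * (\<theta> * (1 - 1 / real w))"
      unfolding fac.S_def[OF fac2] four by (simp add: f2_def)
    moreover have "fac.x f2 = \<theta> * (1 - 1 / real w) * (\<theta> * (1 - 1 / real v))"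
      unfolding fac.x_def[OF fac2] by (simp add: f2_def)
    ultimately show ?thesis using alg_q[of "real v" "real w" \<theta>] v w th0 th1 by simp
  qed
  finally show ?thesis .
qed

lemma pos4: "a \<in> W \<Longrightarrow> b \<in> W \<Longrightarrow> a \<noteq> b \<Longrightarrow>
  expected_capture_time \<theta> (Kverts v w) (Kadj v w) (Play a b True)
       = ennreal (2 * (real v * real w + \<theta> * real w * (real v - 1))
                  / (real v * real w - \<theta>^2 * (real v - 1) * (real w - 1)))"
proof -
  assume a: "a \<in> W" and b: "b \<in> W" and ab: "a \<noteq> b"
  have "expected_capture_time \<theta> (Kverts v w) (Kadj v w) (Play a b True) = ennreal (fac.S f2 2 / (1 - fac.x f2))"
    by (rule fac.expect[OF fac2]) (use chain2 a b ab in auto)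
  also have "fac.S f2 2 / (1 - fac.x f2) = 2 * (real v * real w + \<theta> * real w * (real v - 1))
                  / (real v * real w - \<theta>^2 * (real v - 1) * (real w - 1))"
  proof -
    have "fac.S f2 2 = 2 + 2 * (\<theta> * (1 - 1 / real v))"
      unfolding fac.S_def[OF fac2] four by (simp add: f2_def)
    moreover have "fac.x f2 = \<theta> * (1 - 1 / real v) * (\<theta> * (1 - 1 / real w))"
      unfolding fac.x_def[OF fac2] by (simp add: f2_def mult_ac)
    moreover have "2 * (real w * real v + \<theta> * real w * (real v - 1)) / (real w * real v - \<theta>^2 * (real w - 1) * (real v - 1))
       = 2 * (real v * real w + \<theta> * real w * (real v - 1)) / (real v * real w - \<theta>^2 * (real v - 1) * (real w - 1))"
      by (simp add: algebra_simps)
    ultimately show ?thesis using alg_q[of "real w" "real v" \<theta>] v w th0 th1 by simp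
  qed
  finally show ?thesis .
qed

end

theorem mainTheorem5:
  fixes v w :: nat and \<theta> :: real
  assumes "v > 0" and "w > 0" and "0 \<le> \<theta>" and "\<theta> \<le> 1"
  shows
   "(\<forall>a \<in> Kpart_V v. \<forall>b \<in> Kpart_W w.
       expected_capture_time \<theta> (Kverts v w) (Kadj v w) (Play a b True)
       = ennreal ((4 * real v * real w - 3 * real w - real v + 1) / (real v + real w - 1)))
  \<and> (\<forall>a \<in> Kpart_V v. \<forall>b \<in> Kpart_V v. a \<noteq> b \<longrightarrow>
       expected_capture_time \<theta> (Kverts v w) (Kadj v w) (Play a b True)
       = ennreal (2 * (real v * real w + \<theta> * real v * (real w - 1))
                  / (real v * real w - \<theta>^2 * (real v - 1) * (real w - 1))))
  \<and> (\<forall>a \<in> Kpart_W w. \<forall>b \<in> Kpart_V v.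
       expected_capture_time \<theta> (Kverts v w) (Kadj v w) (Play a b True)
       = ennreal ((4 * real v * real w - 3 * real v - real w + 1) / (real v + real w - 1)))
  \<and> (\<forall>a \<in> Kpart_W w. \<forall>b \<in> Kpart_W w. a \<noteq> b \<longrightarrow>
       expected_capture_time \<theta> (Kverts v w) (Kadj v w) (Play a b True)
       = ennreal (2 * (real v * real w + \<theta> * real w * (real v - 1))
                  / (real v * real w - \<theta>^2 * (real v - 1) * (real w - 1))))"
  using pos1[OF assms] pos2[OF assms] pos3[OF assms] pos4[OF assms] by blast



end
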